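(* Let $\mathcal{T}$ be a $2$-covered $3$-graph on $k\ge7$ vertices such that $\tau(\mathcal{T}[S])\le1$ for every set $S\subseteq V(\mathcal{T})$ with $|S|=7$. Then $\mathcal{T}$ is a star.
   Context: A $3$-graph is $2$-covered if every pair of its vertices is contained in some edge. $\tau(\mathcal{H})$ is the transversal number: the minimum size of a vertex set meeting every edge of $\mathcal{H}$ ($0$ if $\mathcal{H}$ has no edges). $\mathcal{T}[S]$ is the induced subgraph on $S$. A $3$-graph is a star if all its edges contain a common vertex. *)

theory Defs
  imports Main
begin

definition three_graph :: "'a set \<Rightarrow> 'a set set \<Rightarrow> bool" where
  "three_graph V E \<longleftrightarrow> finite V \<and> (\<forall>e\<in>E. e \<subseteq> V \<and> card e = 3)"

definition two_covered :: "'a set \<Rightarrow> 'a set set \<Rightarrow> bool" where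
  "two_covered V E \<longleftrightarrow> (\<forall>x\<in>V. \<forall>y\<in>V. x \<noteq> y \<longrightarrow> (\<exists>e\<in>E. x \<in> e \<and> y \<in> e))"

definition induced_edges :: "'a set set \<Rightarrow> 'a set \<Rightarrow> 'a set set" where
  "induced_edges E S = {e \<in> E. e \<subseteq> S}"

definition is_transversal :: "'a set \<Rightarrow> 'a set set \<Rightarrow> 'a set \<Rightarrow> bool" where
  "is_transversal V E T \<longleftrightarrow> T \<subseteq> V \<and> (\<forall>e\<in>E. T \<inter> e \<noteq> {})"

text \<open>Transversal number (0 if there are no edges, via the empty transversal).\<close>
definition tau :: "'a set \<Rightarrow> 'a set set \<Rightarrow> nat" where
  "tau V E = Min {card T | T. is_transversal V E T}"

definition is_star :: "'a set \<Rightarrow> 'a set set \<Rightarrow> bool" where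
  "is_star V E \<longleftrightarrow> (\<exists>v\<in>V. \<forall>e\<in>E. v \<in> e)"

end

theory Submission
  imports Defs
begin

lemma common_vertex:
  fixes V :: "'a set" and E :: "'a set set"
  assumes tg: "three_graph V E"
    and cV: "card V \<ge> 7"
    and h: "\<forall>S. S \<subseteq> V \<and> card S = 7 \<longrightarrow> tau S (induced_edges E S) \<le> 1"
    and F: "F \<subseteq> E" "F \<noteq> {}" "card (\<Union>F) \<le> 7"
  shows "\<exists>v. \<forall>e\<in>F. v \<in> e"
proof -
  have fV: "finite V" using tg by (simp add: three_graph_def)
  have UV: "\<Union>F \<subseteq> V" using F(1) tg by (auto simp: three_graph_def)
  obtain S where S: "\<Union>F \<subseteq> S" "S \<subseteq> V" "card S = 7"
    using exists_subset_between[OF F(3) cV UV fV] by blast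
  have fS: "finite S" using S(2) fV finite_subset by blast
  define X where "X = {card T | T. is_transversal S (induced_edges E S) T}"
  have "is_transversal S (induced_edges E S) S"
    unfolding is_transversal_def induced_edges_def
  proof (intro conjI ballI)
    fix e assume "e \<in> {e \<in> E. e \<subseteq> S}"
    then have "e \<subseteq> S" "card e = 3" using tg by (auto simp: three_graph_def)
    then show "S \<inter> e \<noteq> {}" using Int_absorb1[of e S] by auto
  qed simp
  then have Xne: "X \<noteq> {}" unfolding X_def by blast
  have "X \<subseteq> card ` Pow S" unfolding X_def is_transversal_def by auto
  then have Xf: "finite X" using fS finite_subset by blast
  have "Min X \<in> X" using Min_in[OF Xf Xne] .
  moreover have "Min X \<le> 1" using h S unfolding tau_def X_def by blast
  ultimately obtain T where T: "is_transversal S (induced_edges E S) T" "card T \<le> 1"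
    unfolding X_def by auto
  have fT: "finite T" using T(1) fS finite_subset unfolding is_transversal_def by blast
  have indF: "\<And>e. e \<in> F \<Longrightarrow> e \<in> induced_edges E S"
    using F(1) S(1) unfolding induced_edges_def by auto
  obtain e0 where "e0 \<in> F" using F(2) by blast
  then have "T \<inter> e0 \<noteq> {}" using T(1) indF unfolding is_transversal_def by blast
  then have "T \<noteq> {}" by blast
  then have "card T = 1" using T(2) fT by (simp add: card_gt_0_iff le_Suc_eq)
  then obtain v where Tv: "T = {v}" using card_1_singleton_iff by (metis One_nat_def)
  show ?thesis
  proof (intro exI ballI)
    fix e assume "e \<in> F"
    then have "T \<inter> e \<noteq> {}" using T(1) indF unfolding is_transversal_def by blast
    then show "v \<in> e" using Tv by auto
  qed
qed

theorem lemma4p4: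
  fixes V :: "'a set" and E :: "'a set set"
  assumes "three_graph V E"
    and "two_covered V E"
    and "card V \<ge> 7"
    and "\<forall>S. S \<subseteq> V \<and> card S = 7 \<longrightarrow> tau S (induced_edges E S) \<le> 1"
  shows "is_star V E"
proof (rule ccontr)
  assume ns: "\<not> is_star V E"
  note cv = common_vertex[OF assms(1) assms(3) assms(4)]
  have ed: "\<And>e. e \<in> E \<Longrightarrow> e \<subseteq> V \<and> card e = 3" using assms(1) by (simp add: three_graph_def)
  have fe: "\<And>e. e \<in> E \<Longrightarrow> finite e" using ed by (metis card.infinite zero_neq_numeral)
  have "V \<noteq> {}" using assms(3) by auto
  then have "E \<noteq> {}" using ns unfolding is_star_def by blast
  then obtain e1 where e1: "e1 \<in> E" by blast
  then obtain a b c where abc: "e1 = {a,b,c}" "a \<noteq> b" "b \<noteq> c" "a \<noteq> c"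
    using ed card_3_iff by metis
  have miss: "\<And>x. x \<in> e1 \<Longrightarrow> \<exists>f\<in>E. x \<notin> f" using ns e1 ed unfolding is_star_def by blast
  obtain fa where fa: "fa \<in> E" "a \<notin> fa" using miss abc by blast
  obtain fb where fb: "fb \<in> E" "b \<notin> fb" using miss abc by blast
  obtain fc where fc: "fc \<in> E" "c \<notin> fc" using miss abc by blast
  have pair: "e \<inter> f \<noteq> {}" if "e \<in> E" "f \<in> E" for e f
  proof -
    have "card (e \<union> f) \<le> card e + card f" by (rule card_Un_le)
    also have "\<dots> \<le> 7" using ed that by simp
    finally have "card (\<Union>{e,f}) \<le> 7" by simp
    moreover have "{e,f} \<subseteq> E" using that by auto
    ultimately obtain v where "\<forall>g\<in>{e,f}. v \<in> g" using cv[of "{e,f}"] by blast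
    then show ?thesis by blast
  qed
  have diff2: "card (f - e1) \<le> 2" if "f \<in> E" for f
  proof -
    have "card (f - e1) = card f - card (f \<inter> e1)" using fe that
      by (intro card_Diff_subset_Int) simp
    moreover have "card (f \<inter> e1) \<ge> 1" using pair[OF that e1] fe that
      by (metis One_nat_def Suc_leI card_gt_0_iff finite_Int)
    ultimately show ?thesis using ed that by simp
  qed
  have triple: "\<exists>v. v \<in> e1 \<and> v \<in> f \<and> v \<in> g" if "f \<in> E" "g \<in> E" for f g
  proof -
    have eq: "\<Union>{e1,f,g} = e1 \<union> (f - e1) \<union> (g - e1)" by blast
    have "card (e1 \<union> (f - e1) \<union> (g - e1)) \<le> card e1 + card (f - e1) + card (g - e1)"
      using card_Un_le[of "e1 \<union> (f - e1)" "g - e1"] card_Un_le[of e1 "f - e1"] by linarith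
    also have "\<dots> \<le> 7" using diff2[OF that(1)] diff2[OF that(2)] ed[OF e1] by simp
    finally have "card (\<Union>{e1,f,g}) \<le> 7" using eq by simp
    then show ?thesis using cv[of "{e1,f,g}"] that e1 by blast
  qed
  have "c \<in> fa \<and> c \<in> fb" using triple[OF fa(1) fb(1)] fa fb abc by blast
  moreover have "b \<in> fa \<and> b \<in> fc" using triple[OF fa(1) fc(1)] fa fc abc by blast
  moreover have "a \<in> fb \<and> a \<in> fc" using triple[OF fb(1) fc(1)] fb fc abc by blast
  ultimately have sub: "{b,c} \<subseteq> fa" "{a,c} \<subseteq> fb" "{a,b} \<subseteq> fc" by auto
  have d1: "card (f - e1) \<le> 1" if "f \<in> E" "{x,y} \<subseteq> f" "x \<in> e1" "y \<in> e1" "x \<noteq> y" for f x y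
  proof -
    have "{x,y} \<subseteq> f \<inter> e1" using that by auto
    moreover have "card {x,y} = 2" using that by simp
    ultimately have "2 \<le> card (f \<inter> e1)" using that fe
      by (metis card_mono finite_Int)
    moreover have "card (f - e1) = card f - card (f \<inter> e1)" using fe that
      by (intro card_Diff_subset_Int) simp
    ultimately show ?thesis using ed that by simp
  qed
  have ca: "card (fa - e1) \<le> 1" using d1[of fa b c] fa sub abc by auto
  have cb: "card (fb - e1) \<le> 1" using d1[of fb a c] fb sub abc by auto
  have cc: "card (fc - e1) \<le> 1" using d1[of fc a b] fc sub abc by auto
  have eq: "\<Union>{e1,fa,fb,fc} = e1 \<union> (fa - e1) \<union> (fb - e1) \<union> (fc - e1)" by blast
  have "card (e1 \<union> (fa - e1) \<union> (fb - e1) \<union> (fc - e1))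
        \<le> card e1 + card (fa - e1) + card (fb - e1) + card (fc - e1)"
    using card_Un_le[of "e1 \<union> (fa - e1) \<union> (fb - e1)" "fc - e1"]
      card_Un_le[of "e1 \<union> (fa - e1)" "fb - e1"] card_Un_le[of e1 "fa - e1"] by linarith
  also have "\<dots> \<le> 7" using ca cb cc ed e1 by simp
  finally have "card (\<Union>{e1,fa,fb,fc}) \<le> 7" using eq by simp
  then obtain v where v: "\<forall>g\<in>{e1,fa,fb,fc}. v \<in> g" using cv[of "{e1,fa,fb,fc}"] e1 fa fb fc by blast
  then show False using abc fa fb fc by auto
qed

end
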